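(* Assume (R). For $n\ge k\ge0$, $$a_{n,k}:=\frac{d^k}{dx^k}A^\star_{n,2k}(x)\Big|_{x=1}=(-1)^nk!\sum_{\nu=0}^{k}\binom{2k-\nu}{k}\binom{n}{\nu}\alpha_{n-\nu}.$$ For $n\ge2$ and $0\le k\le n-2$, $$a_{n,k+2}=(4k+6)\,a_{n,k+1}+n(n-1)\,a_{n-2,k}.$$ For odd $n\ge1$, $A_n(x)=(2x-1)F_n(x(x-1))$ and $\hat f_{n,k}=(-1)^ka_{n,k}$ for $0\le k\le\lfloor n/2\rfloor$.
   Context: Let $(\alpha_n)_{n\ge0}$ be an arbitrary sequence of complex numbers with Appell polynomials $A_n(x)=\sum_{\nu=0}^{n}\binom{n}{\nu}\alpha_{n-\nu}x^\nu$; property (R) means $A_n(1-x)=(-1)^nA_n(x)$ for all $n\ge0$. For $n\ge0,k\in\mathbb Z$ let $A^\star_{n,k}(x)=x^kA_n(x^{-1})$. Let $d_n=\lfloor n/2\rfloor$, $\delta_n=1$ if $n$ odd, $0$ otherwise. Under (R), for each $n$ there is a unique polynomial $F_n(u)=\sum_{k\ge0}f_{n,k}u^k$ of degree at most $d_n$ with $A_n(x)=(2x-1)^{\delta_n}F_n(x(x-1))$; set $\hat f_{n,k}=k!\,f_{n,k}$. *)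

theory Defs
  imports "HOL-Analysis.Analysis" "HOL-Computational_Algebra.Polynomial"
begin

definition appellA :: "(nat \<Rightarrow> complex) \<Rightarrow> nat \<Rightarrow> complex \<Rightarrow> complex" where
  "appellA \<alpha> n x = (\<Sum>\<nu>=0..n. of_nat (n choose \<nu>) * \<alpha> (n - \<nu>) * x ^ \<nu>)"

definition propR :: "(nat \<Rightarrow> complex) \<Rightarrow> bool" where
  "propR \<alpha> \<longleftrightarrow> (\<forall>n x. appellA \<alpha> n (1 - x) = (-1) ^ n * appellA \<alpha> n x)"

definition Astar :: "(nat \<Rightarrow> complex) \<Rightarrow> nat \<Rightarrow> int \<Rightarrow> complex \<Rightarrow> complex" where
  "Astar \<alpha> n k x = x powi k * appellA \<alpha> n (inverse x)"

definition aCoef :: "(nat \<Rightarrow> complex) \<Rightarrow> nat \<Rightarrow> nat \<Rightarrow> complex" where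
  "aCoef \<alpha> n k = (deriv ^^ k) (Astar \<alpha> n (2 * int k)) 1"

definition delta :: "nat \<Rightarrow> nat" where
  "delta n = (if odd n then 1 else 0)"

definition Fpoly :: "(nat \<Rightarrow> complex) \<Rightarrow> nat \<Rightarrow> complex poly" where
  "Fpoly \<alpha> n = (THE p. degree p \<le> n div 2 \<and>
      (\<forall>x. appellA \<alpha> n x = (2 * x - 1) ^ delta n * poly p (x * (x - 1))))"

definition fhat :: "(nat \<Rightarrow> complex) \<Rightarrow> nat \<Rightarrow> nat \<Rightarrow> complex" where
  "fhat \<alpha> n k = fact k * coeff (Fpoly \<alpha> n) k"

end

theory Submission
  imports Defs "HOL-Complex_Analysis.Complex_Analysis"
begin



fun ff :: "int \<Rightarrow> nat \<Rightarrow> complex" where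
  "ff m 0 = 1" | "ff m (Suc j) = of_int m * ff (m - 1) j"

lemma hd_powi: "x \<noteq> 0 \<Longrightarrow> (deriv ^^ j) (\<lambda>x::complex. x powi m) x = ff m j * x powi (m - int j)"
proof (induction j arbitrary: m x)
  case 0 then show ?case by simp
next
  case (Suc j m x)
  have ev: "eventually (\<lambda>y. deriv (\<lambda>x::complex. x powi m) y = of_int m * y powi (m - 1)) (nhds x)"
  proof -
    have "eventually (\<lambda>y. y \<in> -{0::complex}) (nhds x)"
      using Suc.prems by (intro eventually_nhds_in_open) auto
    then show ?thesis
      by eventually_elim (auto intro!: DERIV_imp_deriv derivative_eq_intros)
  qed
  have "(deriv ^^ Suc j) (\<lambda>x::complex. x powi m) x = (deriv ^^ j) (deriv (\<lambda>x::complex. x powi m)) x"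
    by (simp only: funpow_Suc_right o_apply)
  also have "\<dots> = (deriv ^^ j) (\<lambda>y. of_int m * y powi (m - 1)) x"
    by (rule higher_deriv_cong_ev[OF ev refl])
  also have "\<dots> = of_int m * (deriv ^^ j) (\<lambda>y. y powi (m - 1)) x"
    using Suc.prems by (intro higher_deriv_cmult[where A="-{0}"]) (auto intro!: holomorphic_intros)
  also have "\<dots> = ff m (Suc j) * x powi (m - int (Suc j))"
    using Suc.IH[OF Suc.prems, of "m-1"] by (simp add: algebra_simps)
  finally show ?case .
qed




lemma higher_deriv_sum:
  fixes f :: "'i \<Rightarrow> complex \<Rightarrow> complex"
  assumes "finite I" "\<And>i. i \<in> I \<Longrightarrow> f i holomorphic_on S" "open S" "z \<in> S"
  shows "(deriv ^^ n) (\<lambda>w. \<Sum>i\<in>I. f i w) z = (\<Sum>i\<in>I. (deriv ^^ n) (f i) z)"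
  using assms(1,2)
proof (induction I rule: finite_induct)
  case empty then show ?case by simp
next
  case (insert a I)
  have "(deriv ^^ n) (\<lambda>w. \<Sum>i\<in>insert a I. f i w) z = (deriv ^^ n) (\<lambda>w. f a w + (\<Sum>i\<in>I. f i w)) z"
    using insert.hyps by simp
  also have "\<dots> = (deriv ^^ n) (f a) z + (deriv ^^ n) (\<lambda>w. \<Sum>i\<in>I. f i w) z"
    using insert.prems assms(3,4)
    by (intro higher_deriv_add[where S=S]) (auto intro!: holomorphic_on_sum)
  finally show ?case using insert by simp
qed

lemma hd_shift_pow: "(deriv ^^ i) (\<lambda>w::complex. (w - 1) ^ v) 1 = (if i = v then fact v else 0)"
proof -
  have "(deriv ^^ i) (\<lambda>w::complex. (w - 1) ^ v) 1 = pochhammer (of_nat (Suc v - i)) i * (1 - 1) ^ (v - i)"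
    by (rule higher_deriv_power)
  also have "\<dots> = (if i = v then fact v else 0)"
  proof (cases "i < v")
    case True then show ?thesis by simp
  next
    case False
    show ?thesis
    proof (cases "i = v")
      case True then show ?thesis by (simp add: pochhammer_fact)
    next
      case False2: False
      with False have "Suc v - i = 0" by simp
      then show ?thesis using False2 False by (simp add: pochhammer_0_left)
    qed
  qed
  finally show ?thesis .
qed

lemma lemD: "(deriv ^^ k) (\<lambda>x::complex. (x - 1) ^ v * x powi m) 1
   = (if v \<le> k then of_nat (k choose v) * fact v * ff m (k - v) else 0)"
proof -
  have "(deriv ^^ k) (\<lambda>x::complex. (x - 1) ^ v * x powi m) 1
     = (\<Sum>i = 0..k. of_nat (k choose i) * (deriv ^^ i) (\<lambda>x::complex. (x - 1) ^ v) 1 * (deriv ^^ (k-i)) (\<lambda>x. x powi m) 1)"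
    by (rule higher_deriv_mult[where S="-{0}"]) (auto intro!: holomorphic_intros)
  also have "\<dots> = (\<Sum>i = 0..k. if i = v then of_nat (k choose v) * fact v * ff m (k - v) else 0)"
    by (intro sum.cong refl) (simp add: hd_shift_pow hd_powi)
  also have "\<dots> = (if v \<le> k then of_nat (k choose v) * fact v * ff m (k - v) else 0)"
    by (subst sum.delta) auto
  finally show ?thesis .
qed

lemma ff_nat: "j \<le> m \<Longrightarrow> ff (int m) j * fact (m - j) = fact m"
proof (induction j arbitrary: m)
  case 0 then show ?case by simp
next
  case (Suc j m)
  then obtain m' where m: "m = Suc m'" by (cases m) auto
  have "int m - 1 = int m'" using m by simp
  then have "ff (int m) (Suc j) * fact (m - Suc j) = of_nat m * (ff (int m') j * fact (m' - j))"
    using m by simp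
  also have "\<dots> = fact m" using Suc m by (simp add: fact_Suc)
  finally show ?case .
qed

lemma ff_last: "ff m (Suc j) = ff m j * of_int (m - int j)"
proof (induction j arbitrary: m)
  case 0 then show ?case by simp
next
  case (Suc j m)
  have "ff m (Suc (Suc j)) = of_int m * ff (m - 1) (Suc j)" by simp
  also have "\<dots> = of_int m * (ff (m - 1) j * of_int (m - 1 - int j))" by (subst Suc.IH) (rule refl)
  also have "\<dots> = ff m (Suc j) * of_int (m - int (Suc j))" by (simp add: algebra_simps)
  finally show ?case .
qed



lemma coef_id:
  assumes "v \<le> k"
  shows "of_nat (k choose v) * fact v * ff (2 * int k - int v) (k - v) = (fact k * of_nat ((2*k - v) choose k) :: complex)"
proof -
  have e: "2 * int k - int v = int (2*k - v)" using assms by simp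
  have f1: "ff (int (2*k - v)) (k - v) * fact k = (fact (2*k - v) :: complex)"
    using ff_nat[of "k - v" "2*k - v"] assms by (simp add: diff_diff_right)
  have "of_nat (fact v * fact (k - v) * (k choose v)) = (of_nat (fact k)::complex)"
    by (simp only: binomial_fact_lemma[OF assms])
  then have f2: "(of_nat (k choose v) * fact v * fact (k - v) :: complex) = fact k"
    by (simp only: of_nat_mult of_nat_fact mult_ac)
  have a: "2*k - v - k = k - v" using assms by simp
  have "fact k * fact (2*k - v - k) * ((2*k - v) choose k) = fact (2*k - v)"
    using assms by (intro binomial_fact_lemma) simp
  then have "fact k * fact (k - v) * ((2*k - v) choose k) = fact (2*k - v)" by (simp only: a)
  then have "(of_nat (fact k * fact (k - v) * ((2*k - v) choose k)) :: complex) = of_nat (fact (2*k - v))" by (simp only:)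
  then have f3: "(of_nat ((2*k - v) choose k) * fact k * fact (k - v) :: complex) = fact (2*k - v)"
    by (simp only: of_nat_mult of_nat_fact mult_ac)
  have nz: "(fact k * fact (k - v) :: complex) \<noteq> 0" by simp
  have "(of_nat (k choose v) * fact v * ff (int (2*k - v)) (k - v)) * (fact k * fact (k - v))
         = (of_nat (k choose v) * fact v * fact (k - v)) * (ff (int (2*k - v)) (k - v) * fact k :: complex)"
    by (simp only: mult_ac)
  also have "\<dots> = fact k * fact (2*k - v)" by (simp only: f1 f2)
  also have "\<dots> = fact k * (of_nat ((2*k - v) choose k) * fact k * fact (k - v))" by (simp only: f3)
  also have "\<dots> = (fact k * of_nat ((2*k - v) choose k) :: complex) * (fact k * fact (k - v))" by (simp only: mult_ac)
  finally have "(of_nat (k choose v) * fact v * ff (int (2*k - v)) (k - v)) = (fact k * of_nat ((2*k - v) choose k) :: complex)"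
    using nz by (simp only: mult_cancel_right) simp
  then show ?thesis by (simp only: e)
qed



lemma R_inv: "propR \<alpha> \<Longrightarrow> appellA \<alpha> n y = (-1)^n * appellA \<alpha> n (1 - y)"
proof -
  assume R: "propR \<alpha>"
  have "appellA \<alpha> n (1 - y) = (-1)^n * appellA \<alpha> n y" using R unfolding propR_def by blast
  then have "(-1)^n * appellA \<alpha> n (1 - y) = ((-1)^n * (-1)^n) * appellA \<alpha> n y" by (simp add: mult.assoc)
  also have "(-1::complex)^n * (-1)^n = 1" by (simp flip: power_add)
  finally show ?thesis by simp
qed

lemma term_eq:
  fixes x :: complex
  assumes "x \<noteq> 0"
  shows "x powi m * (1 - inverse x) ^ v = (x - 1) ^ v * x powi (m - int v)"
proof -
  have "(x - 1) / x = x / x - 1 / x" by (rule diff_divide_distrib)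
  then have "1 - inverse x = (x - 1) / x" using assms by (simp add: inverse_eq_divide)
  then have "x powi m * (1 - inverse x) ^ v = (x - 1) ^ v * (x powi m / x ^ v)"
    by (simp add: power_divide)
  also have "x powi m / x ^ v = x powi (m - int v)" using assms by (simp add: power_int_diff)
  finally show ?thesis .
qed

lemma Astar_eq:
  assumes R: "propR \<alpha>" and x: "x \<noteq> 0"
  shows "Astar \<alpha> n m x = (-1)^n * (\<Sum>v=0..n. (of_nat (n choose v) * \<alpha> (n - v)) * ((x - 1) ^ v * x powi (m - int v)))"
proof -
  have "Astar \<alpha> n m x = x powi m * ((-1)^n * appellA \<alpha> n (1 - inverse x))"
    unfolding Astar_def by (subst R_inv[OF R]) (rule refl)
  also have "\<dots> = (-1)^n * (\<Sum>v=0..n. (of_nat (n choose v) * \<alpha> (n - v)) * (x powi m * (1 - inverse x) ^ v))"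
    unfolding appellA_def by (simp add: sum_distrib_left mult_ac)
  also have "\<dots> = (-1)^n * (\<Sum>v=0..n. (of_nat (n choose v) * \<alpha> (n - v)) * ((x - 1) ^ v * x powi (m - int v)))"
    using x by (simp add: term_eq)
  finally show ?thesis .
qed

lemma aCoef_gen:
  assumes R: "propR \<alpha>"
  shows "aCoef \<alpha> n k = (-1)^n * (\<Sum>v=0..n. (of_nat (n choose v) * \<alpha> (n - v)) *
            (if v \<le> k then of_nat (k choose v) * fact v * ff (2 * int k - int v) (k - v) else 0))"
proof -
  have ev: "eventually (\<lambda>x. Astar \<alpha> n (2 * int k) x = (-1)^n * (\<Sum>v=0..n. (of_nat (n choose v) * \<alpha> (n - v)) * ((x - 1) ^ v * x powi (2 * int k - int v)))) (nhds (1::complex))"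
  proof -
    have "eventually (\<lambda>y. y \<in> -{0::complex}) (nhds 1)"
      by (intro eventually_nhds_in_open) auto
    then show ?thesis by eventually_elim (auto intro!: Astar_eq[OF R])
  qed
  have "aCoef \<alpha> n k = (deriv ^^ k) (\<lambda>x. (-1)^n * (\<Sum>v=0..n. (of_nat (n choose v) * \<alpha> (n - v)) * ((x - 1) ^ v * x powi (2 * int k - int v)))) 1"
    unfolding aCoef_def by (rule higher_deriv_cong_ev[OF ev refl])
  also have "\<dots> = (-1)^n * (deriv ^^ k) (\<lambda>x. \<Sum>v=0..n. (of_nat (n choose v) * \<alpha> (n - v)) * ((x - 1) ^ v * x powi (2 * int k - int v))) 1"
    by (rule higher_deriv_cmult[where A="-{0}"]) (auto intro!: holomorphic_intros)
  also have "(deriv ^^ k) (\<lambda>x. \<Sum>v=0..n. (of_nat (n choose v) * \<alpha> (n - v)) * ((x - 1) ^ v * x powi (2 * int k - int v))) 1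
      = (\<Sum>v=0..n. (deriv ^^ k) (\<lambda>x. (of_nat (n choose v) * \<alpha> (n - v)) * ((x - 1) ^ v * x powi (2 * int k - int v))) 1)"
    by (rule higher_deriv_sum[where S="-{0}"]) (auto intro!: holomorphic_intros)
  also have "\<dots> = (\<Sum>v=0..n. (of_nat (n choose v) * \<alpha> (n - v)) * (deriv ^^ k) (\<lambda>x. (x - 1) ^ v * x powi (2 * int k - int v)) 1)"
    by (intro sum.cong refl higher_deriv_cmult[where A="-{0}"]) (auto intro!: holomorphic_intros)
  finally show ?thesis by (simp only: lemD)
qed



lemma part1:
  assumes R: "propR \<alpha>" and kn: "k \<le> n"
  shows "aCoef \<alpha> n k = (-1) ^ n * fact k *
              (\<Sum>\<nu>=0..k. of_nat ((2 * k - \<nu>) choose k) * of_nat (n choose \<nu>) * \<alpha> (n - \<nu>))"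
proof -
  have C1: "(\<Sum>v=0..n. (of_nat (n choose v) * \<alpha> (n - v)) *
            (if v \<le> k then of_nat (k choose v) * fact v * ff (2 * int k - int v) (k - v) else 0))
      = (\<Sum>v=0..k. (of_nat (n choose v) * \<alpha> (n - v)) * (fact k * of_nat ((2*k - v) choose k)))"
  proof (rule sum.mono_neutral_cong_right)
    show "{0..k} \<subseteq> {0..n}" using kn by auto
  next
    show "\<forall>v\<in>{0..n} - {0..k}. (of_nat (n choose v) * \<alpha> (n - v)) *
            (if v \<le> k then of_nat (k choose v) * fact v * ff (2 * int k - int v) (k - v) else 0) = 0" by simp
  next
    fix v assume "v \<in> {0..k}"
    then show "(of_nat (n choose v) * \<alpha> (n - v)) *
            (if v \<le> k then of_nat (k choose v) * fact v * ff (2 * int k - int v) (k - v) else 0) = 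
            (of_nat (n choose v) * \<alpha> (n - v)) * (fact k * of_nat ((2*k - v) choose k))"
      using coef_id[of v k] by simp
  qed simp
  have C2: "(\<Sum>v=0..k. (of_nat (n choose v) * \<alpha> (n - v)) * (fact k * of_nat ((2*k - v) choose k))) = fact k * (\<Sum>\<nu>=0..k. of_nat ((2 * k - \<nu>) choose k) * of_nat (n choose \<nu>) * \<alpha> (n - \<nu>))"
    unfolding sum_distrib_left by (intro sum.cong refl) (simp only: mult_ac)
  show ?thesis unfolding aCoef_gen[OF R, of n k] C1 C2 by (simp only: mult.assoc)
qed



lemma poly_id:
  fixes k t v :: nat
  assumes "v + t = k + 2"
  shows "(k+t+2)*(k+t+1) = (4*k+6)*t + v * (v - 1)"
proof (cases v)
  case 0
  then have "t = k + 2" using assms by simp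
  then show ?thesis using 0 by (simp add: algebra_simps)
next
  case (Suc w)
  then have kk: "k + 1 = t + w" using assms by simp
  have vv: "v * (v - 1) = (w+1)*w" using Suc by simp
  have ik: "int k = int t + int w - 1" using kk by linarith
  have "int ((k+t+2)*(k+t+1)) = int ((4*k+6)*t + (w+1)*w)"
    by (simp add: ik algebra_simps)
  then show ?thesis unfolding vv by (simp only: of_nat_eq_iff)
qed

lemma fact_binom_A: "fact a * ((a + t) choose a) * fact t = (fact (a + t) :: nat)"
  using binomial_fact_lemma[of a "a+t"] by (simp add: mult_ac)

lemma fact_binom_B: "fact (k+1) * ((k + t) choose (k+1)) * fact t = t * (fact (k + t) :: nat)"
proof (cases t)
  case 0 then show ?thesis by simp
next
  case (Suc s)
  have "fact (k+1) * ((k + 1 + s) choose (k+1)) * fact s = (fact (k + 1 + s) :: nat)"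
    by (rule fact_binom_A)
  have e: "k + t = k + 1 + s" using Suc by simp
  have "fact (k+1) * ((k + t) choose (k+1)) * fact t = fact (k+1) * ((k + 1 + s) choose (k+1)) * (Suc s * fact s)"
    unfolding e Suc by simp
  also have "\<dots> = Suc s * (fact (k+1) * ((k + 1 + s) choose (k+1)) * fact s)" by (simp only: mult_ac)
  also have "\<dots> = t * fact (k + t)" by (simp only: e Suc \<open>fact (k+1) * ((k + 1 + s) choose (k+1)) * fact s = fact (k + 1 + s)\<close>) simp
  finally show ?thesis .
qed

lemma coef_rec:
  fixes k v :: nat
  assumes "v \<le> k + 2"
  shows "fact (k+2) * ((2*(k+2) - v) choose (k+2))
       = (4*k+6) * (fact (k+1) * ((2*(k+1) - v) choose (k+1))) + fact k * ((2*k+2 - v) choose k) * (v * (v - 1))"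
proof -
  obtain t where t: "v + t = k + 2" using assms le_add_diff_inverse by blast
  have e1: "2*(k+2) - v = (k+2) + t" "2*(k+1) - v = k + t" "2*k+2 - v = k + t" using t by auto
  have "fact (k+2) * ((2*(k+2) - v) choose (k+2)) * fact t = fact (k+2+t)"
    unfolding e1 by (rule fact_binom_A)
  also have "\<dots> = (k+t+2)*(k+t+1) * fact (k+t)"
  proof -
    have "k+2+t = Suc (Suc (k+t))" by simp
    then have "fact (k+2+t) = Suc (Suc (k+t)) * (Suc (k+t) * fact (k+t))" by (simp only: fact_Suc of_nat_id)
    then show ?thesis by (simp add: algebra_simps)
  qed
  also have "\<dots> = ((4*k+6)*t + v * (v - 1)) * fact (k+t)" using poly_id[OF t] by simp
  also have "\<dots> = ((4*k+6) * (fact (k+1) * ((2*(k+1) - v) choose (k+1))) + fact k * ((2*k+2 - v) choose k) * (v * (v - 1))) * fact t"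
  proof -
    have b: "fact (k+1) * ((k + t) choose (k+1)) * fact t = t * (fact (k + t) :: nat)" by (rule fact_binom_B)
    have c: "fact k * ((k + t) choose k) * fact t = (fact (k + t) :: nat)" by (rule fact_binom_A)
    define V where "V = v * (v - 1)"
    have "((4*k+6)*t + V) * fact (k+t) = (4*k+6)*(t*fact (k+t)) + V*fact (k+t)" by (simp only: distrib_right mult.assoc)
    also have "\<dots> = (4*k+6)*(fact (k+1) * ((k + t) choose (k+1)) * fact t) + V*(fact k * ((k + t) choose k) * fact t)" by (simp only: b c)
    also have "\<dots> = ((4*k+6) * (fact (k+1) * ((k + t) choose (k+1))) + fact k * ((k + t) choose k) * V) * fact t"
      by (simp only: distrib_right distrib_left mult_ac)
    finally show ?thesis unfolding e1 V_def .
  qed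
  finally show ?thesis by (simp only: mult_cancel_right fact_nonzero) simp
qed




lemma part1':
  assumes R: "propR \<alpha>" and kn: "k \<le> n"
  shows "aCoef \<alpha> n k = (-1)^n * (\<Sum>v=0..k. of_nat (fact k * ((2*k - v) choose k)) * (of_nat (n choose v) * \<alpha> (n - v)))"
  unfolding part1[OF R kn] by (simp add: sum_distrib_left mult_ac)

lemma binom_shift:
  assumes "2 \<le> n"
  shows "n * (n - 1) * ((n - 2) choose u) = (u+2) * (u+1) * (n choose (u+2))"
proof -
  define m where "m = n - 2"
  have n: "n = m + 2" using assms by (simp add: m_def)
  have h1: "Suc m * (m choose u) = (Suc m choose Suc u) * Suc u" by (rule Suc_times_binomial_eq)
  have h2: "Suc (Suc m) * (Suc m choose Suc u) = (Suc (Suc m) choose Suc (Suc u)) * Suc (Suc u)" by (rule Suc_times_binomial_eq)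
  have e: "n = Suc (Suc m)" "n - 1 = Suc m" "n - 2 = m" "u + 2 = Suc (Suc u)" "u + 1 = Suc u" using n by auto
  have "n * (n - 1) * ((n - 2) choose u) = Suc (Suc m) * (Suc m * (m choose u))" by (simp only: e(2,3)) (simp only: e(1) mult.assoc)
  also have "\<dots> = (Suc (Suc m) * (Suc m choose Suc u)) * Suc u" by (simp only: h1 mult_ac)
  also have "\<dots> = (Suc (Suc m) choose Suc (Suc u)) * Suc (Suc u) * Suc u" by (simp only: h2)
  also have "\<dots> = (u+2) * (u+1) * (n choose (u+2))" unfolding e by (simp only: mult_ac)
  finally show ?thesis .
qed

lemma part2:
  assumes R: "propR \<alpha>" and n2: "2 \<le> n" and kn: "k \<le> n - 2"
  shows "aCoef \<alpha> n (k + 2) = (4 * of_nat k + 6) * aCoef \<alpha> n (k + 1)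
              + of_nat (n * (n - 1)) * aCoef \<alpha> (n - 2) k"
proof -
  define c where "c v = of_nat (n choose v) * \<alpha> (n - v)" for v
  have A1: "aCoef \<alpha> n (k+2) = (-1)^n * (\<Sum>v=0..k+2. of_nat (fact (k+2) * ((2*(k+2) - v) choose (k+2))) * c v)"
    unfolding c_def using kn n2 by (intro part1'[OF R]) simp
  have A2: "aCoef \<alpha> n (k+1) = (-1)^n * (\<Sum>v=0..k+2. of_nat (fact (k+1) * ((2*(k+1) - v) choose (k+1))) * c v)"
  proof -
    have "aCoef \<alpha> n (k+1) = (-1)^n * (\<Sum>v=0..k+1. of_nat (fact (k+1) * ((2*(k+1) - v) choose (k+1))) * c v)"
      unfolding c_def using kn n2 by (intro part1'[OF R]) simp
    also have "(\<Sum>v=0..k+1. of_nat (fact (k+1) * ((2*(k+1) - v) choose (k+1))) * c v)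
       = (\<Sum>v=0..k+2. of_nat (fact (k+1) * ((2*(k+1) - v) choose (k+1))) * c v)"
    proof -
      have z: "2*(k+1) - Suc (k+1) = k" by simp
      have "(\<Sum>v=0..Suc (k+1). of_nat (fact (k+1) * ((2*(k+1) - v) choose (k+1))) * c v)
         = (\<Sum>v=0..k+1. of_nat (fact (k+1) * ((2*(k+1) - v) choose (k+1))) * c v)
           + of_nat (fact (k+1) * ((2*(k+1) - Suc (k+1)) choose (k+1))) * c (Suc (k+1))"
        by (rule sum.atLeast0_atMost_Suc)
      also have "\<dots> = (\<Sum>v=0..k+1. of_nat (fact (k+1) * ((2*(k+1) - v) choose (k+1))) * c v)"
        unfolding z by simp
      finally show ?thesis by simp
    qed
    finally show ?thesis .
  qed
  define g where "g v = (of_nat (fact k * ((2*k+2 - v) choose k) * (v * (v - 1))) :: complex) * c v" for v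
  have A3: "of_nat (n * (n - 1)) * aCoef \<alpha> (n - 2) k = (-1)^n * (\<Sum>v=0..k+2. g v)"
  proof -
    have neg: "(-1::complex)^(n-2) = (-1)^n"
    proof -
      define m where "m = n - 2"
      have n: "n = m + 2" using n2 by (simp add: m_def)
      show ?thesis using n by simp
    qed
    have "aCoef \<alpha> (n-2) k = (-1)^(n-2) * (\<Sum>u=0..k. of_nat (fact k * ((2*k - u) choose k)) * (of_nat ((n-2) choose u) * \<alpha> (n - 2 - u)))"
      using kn by (intro part1'[OF R]) simp
    then have "of_nat (n * (n - 1)) * aCoef \<alpha> (n - 2) k
       = (-1)^n * (\<Sum>u=0..k. of_nat (n * (n - 1)) * (of_nat (fact k * ((2*k - u) choose k)) * (of_nat ((n-2) choose u) * \<alpha> (n - 2 - u))))"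
      unfolding neg by (simp add: sum_distrib_left mult_ac)
    also have "(\<Sum>u=0..k. of_nat (n * (n - 1)) * (of_nat (fact k * ((2*k - u) choose k)) * (of_nat ((n-2) choose u) * \<alpha> (n - 2 - u))))
        = (\<Sum>u=0..k. g (u + 2))"
    proof (intro sum.cong refl)
      fix u assume "u \<in> {0..k}"
      have b: "(of_nat (n * (n - 1) * ((n - 2) choose u)) :: complex) = of_nat ((u+2) * (u+1) * (n choose (u+2)))"
        using binom_shift[OF n2] by simp
      have e: "2*k+2 - (u+2) = 2*k - u" "u + 2 - 1 = u + 1" "n - 2 - u = n - (u + 2)" by auto
      have "of_nat (n * (n - 1)) * (of_nat (fact k * ((2*k - u) choose k)) * (of_nat ((n-2) choose u) * \<alpha> (n - 2 - u)))
          = (of_nat (n * (n - 1) * ((n - 2) choose u)) :: complex) * of_nat (fact k * ((2*k - u) choose k)) * \<alpha> (n - (u + 2))"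
        unfolding e by (simp only: of_nat_mult mult_ac)
      also have "\<dots> = g (u + 2)"
        unfolding b g_def c_def e by (simp only: of_nat_mult mult_ac)
      finally show "of_nat (n * (n - 1)) * (of_nat (fact k * ((2*k - u) choose k)) * (of_nat ((n-2) choose u) * \<alpha> (n - 2 - u))) = g (u + 2)" .
    qed
    also have "(\<Sum>u=0..k. g (u + 2)) = (\<Sum>v=0+2..k+2. g v)"
      by (rule sum.shift_bounds_cl_nat_ivl[symmetric])
    also have "\<dots> = (\<Sum>v=0..k+2. g v)"
    proof (rule sum.mono_neutral_left)
      show "\<forall>i\<in>{0..k + 2} - {0 + 2..k + 2}. g i = 0"
      proof
        fix i assume "i \<in> {0..k + 2} - {0 + 2..k + 2}"
        then have "i = 0 \<or> i = 1" by auto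
        then show "g i = 0" unfolding g_def by auto
      qed
    qed auto
    finally show ?thesis .
  qed
  have "(4 * of_nat k + 6) * aCoef \<alpha> n (k + 1) + of_nat (n * (n - 1)) * aCoef \<alpha> (n - 2) k
      = (-1)^n * (\<Sum>v=0..k+2. ((4 * of_nat k + 6) * of_nat (fact (k+1) * ((2*(k+1) - v) choose (k+1))) + of_nat (fact k * ((2*k+2 - v) choose k) * (v * (v - 1)))) * c v)"
  proof -
    have aux: "\<And>(x::complex) s A B. x * (s * A) + s * B = s * (x * A + B)" by (simp add: algebra_simps)
    have "(4 * of_nat k + 6) * (\<Sum>v=0..k+2. of_nat (fact (k+1) * ((2*(k+1) - v) choose (k+1))) * c v) + (\<Sum>v=0..k+2. g v)
       = (\<Sum>v=0..k+2. ((4 * of_nat k + 6) * of_nat (fact (k+1) * ((2*(k+1) - v) choose (k+1))) + of_nat (fact k * ((2*k+2 - v) choose k) * (v * (v - 1)))) * c v)"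
      unfolding g_def sum_distrib_left sum.distrib[symmetric] by (intro sum.cong refl) (simp only: distrib_right distrib_left mult_ac)
    then show ?thesis unfolding A2 A3 aux by (simp only:)
  qed
  also have "\<dots> = (-1)^n * (\<Sum>v=0..k+2. of_nat (fact (k+2) * ((2*(k+2) - v) choose (k+2))) * c v)"
  proof -
    have "(\<Sum>v=0..k+2. ((4 * of_nat k + 6) * of_nat (fact (k+1) * ((2*(k+1) - v) choose (k+1))) + of_nat (fact k * ((2*k+2 - v) choose k) * (v * (v - 1)))) * c v)
        = (\<Sum>v=0..k+2. of_nat (fact (k+2) * ((2*(k+2) - v) choose (k+2))) * c v)"
    proof (intro sum.cong refl)
      fix v assume "v \<in> {0..k+2}"
      then have "v \<le> k + 2" by simp
      from coef_rec[OF this] have "(of_nat (fact (k+2) * ((2*(k+2) - v) choose (k+2))) :: complex)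
        = of_nat ((4*k+6) * (fact (k+1) * ((2*(k+1) - v) choose (k+1))) + fact k * ((2*k+2 - v) choose k) * (v * (v - 1)))"
        by (simp only:)
      also have "\<dots> = (4 * of_nat k + 6) * of_nat (fact (k+1) * ((2*(k+1) - v) choose (k+1))) + of_nat (fact k * ((2*k+2 - v) choose k) * (v * (v - 1)))"
        by (simp only: of_nat_add of_nat_mult) simp
      finally show "((4 * of_nat k + 6) * of_nat (fact (k+1) * ((2*(k+1) - v) choose (k+1))) + of_nat (fact k * ((2*k+2 - v) choose k) * (v * (v - 1)))) * c v
        = of_nat (fact (k+2) * ((2*(k+2) - v) choose (k+2))) * c v" by simp
    qed
    then show ?thesis by simp
  qed
  finally show ?thesis unfolding A1 by simp
qed




abbreviation sP :: "complex poly" where "sP \<equiv> [:0, -1, 1:]"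
abbreviation tP :: "complex poly" where "tP \<equiv> [:1, -1:]"

lemma poly_sP: "poly sP x = x * (x - 1)" by (simp add: algebra_simps)
lemma poly_tP: "poly tP x = 1 - x" by simp

lemma sP_sym: "pcompose sP tP = sP"
  by (simp add: poly_eq_poly_eq_iff[symmetric] poly_pcompose fun_eq_iff algebra_simps)

lemma sP_factor: "sP = [:0,1:] * [:-1,1:]" by simp

lemma sym_repr:
  fixes p :: "complex poly"
  assumes "pcompose p tP = p"
  shows "\<exists>q. p = pcompose q sP"
  using assms
proof (induction "degree p" arbitrary: p rule: less_induct)
  case less
  define c where "c = poly p 0"
  define p' where "p' = p - [:c:]"
  show ?case
  proof (cases "p' = 0")
    case True
    then have "p = pcompose [:c:] sP" unfolding p'_def by simp
    then show ?thesis by blast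
  next
    case False
    have "poly p' 0 = 0" unfolding p'_def c_def by simp
    then have "[:-0, 1:] dvd p'" by (simp only: poly_eq_0_iff_dvd)
    then obtain r1 where r1: "p' = [:0,1:] * r1" by (auto elim: dvdE)
    have p01: "poly p 1 = poly p 0"
    proof -
      have "poly (pcompose p tP) 0 = poly p 0" using less.prems by simp
      then show ?thesis by (simp add: poly_pcompose)
    qed
    have "poly p' 1 = 0" unfolding p'_def c_def using p01 by simp
    then have "poly r1 1 = 0" using r1 by simp
    then have "[:-1, 1:] dvd r1" by (simp only: poly_eq_0_iff_dvd)
    then obtain r where r: "r1 = [:-1,1:] * r" by (auto elim: dvdE)
    have pr: "p' = sP * r" unfolding r1 r sP_factor by (simp only: mult.assoc)
    have rnz: "r \<noteq> 0" using False pr by auto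
    have sPnz: "sP \<noteq> 0" by simp
    have "pcompose p' tP = p'" unfolding p'_def pcompose_diff using less.prems by simp
    then have "sP * pcompose r tP = sP * r" unfolding pr pcompose_mult sP_sym .
    then have rsym: "pcompose r tP = r" by (rule mult_left_cancel[OF sPnz, THEN iffD1])
    have dsP: "degree sP = 2" by simp
    have "degree p' = 2 + degree r" unfolding pr degree_mult_eq[OF sPnz rnz] dsP ..
    moreover have "degree p' \<le> degree p" unfolding p'_def by (rule degree_diff_le) auto
    ultimately have "degree r < degree p" by simp
    from less.hyps[OF this rsym] obtain q where q: "r = pcompose q sP" by blast
    have "p = [:c:] + sP * pcompose q sP" using pr q unfolding p'_def by (simp add: algebra_simps)
    also have "\<dots> = pcompose (pCons c q) sP" by (simp only: pcompose_pCons)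
    finally show ?thesis by blast
  qed
qed




lemma ffE:
  assumes "j < k"
  shows "2 * ff (2*int k - 2*int j - 1) (k-j) = ff (2*int k - 2*int j) (k-j)"
proof -
  obtain s where s: "k - j = Suc s" using assms by (metis Suc_diff_Suc)
  have e: "2*int k - 2*int j = 2 * int (Suc s)" using s assms by simp
  have "ff (2 * int (Suc s) - 1) (Suc s) = ff (2 * int (Suc s) - 1) s * of_int (2 * int (Suc s) - 1 - int s)"
    by (rule ff_last)
  also have "of_int (2 * int (Suc s) - 1 - int s) = (of_nat (Suc s) :: complex)" by simp
  finally have a: "ff (2 * int (Suc s) - 1) (Suc s) = ff (2 * int (Suc s) - 1) s * of_nat (Suc s)" .
  have b: "ff (2 * int (Suc s)) (Suc s) = of_int (2 * int (Suc s)) * ff (2 * int (Suc s) - 1) s" by simp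
  show ?thesis unfolding e s a b by simp
qed

lemma pt_term:
  fixes x :: complex
  assumes x: "x \<noteq> 0"
  shows "x powi (2*int k) * (2 * inverse x - 1) * (inverse x * (inverse x - 1)) ^ j
     = (-1)^j * (2 * ((x - 1)^j * x powi (2*int k - 2*int j - 1)) - (x - 1)^j * x powi (2*int k - 2*int j))"
proof -
  define P where "P = x powi (2*int k)"
  have e1: "x powi (2*int k - 2*int j - 1) = P / x ^ (2*j+1)"
  proof -
    have "2*int k - 2*int j - 1 = 2*int k - int (2*j+1)" by simp
    then show ?thesis unfolding P_def by (simp only: power_int_diff[OF disjI1[OF x]] power_int_of_nat)
  qed
  have e2: "x powi (2*int k - 2*int j) = P / x ^ (2*j)"
  proof -
    have "2*int k - 2*int j = 2*int k - int (2*j)" by simp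
    then show ?thesis unfolding P_def by (simp only: power_int_diff[OF disjI1[OF x]] power_int_of_nat)
  qed
  have e3: "inverse x * (inverse x - 1) = (-1) * (x - 1) / x^2" using x by (simp add: field_simps power2_eq_square)
  have e4: "((-1) * (x - 1) / x^2) ^ j = (-1)^j * (x - 1)^j / x^(2*j)"
    by (simp only: power_divide power_mult_distrib power_mult)
  have e5: "(1 - x)^j = (-1)^j * (x - 1)^j"
  proof -
    have "1 - x = (-1) * (x - 1)" by simp
    then show ?thesis by (simp only: power_mult_distrib)
  qed
  show ?thesis unfolding e1 e2 e3 e4 P_def[symmetric] using x by (simp add: field_simps e5)
qed

lemma aCoef_from_F:
  assumes rep: "\<forall>x. appellA \<alpha> n x = (2*x - 1) * poly q (x*(x-1))"
  shows "aCoef \<alpha> n k = (-1)^k * fact k * coeff q k"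
proof -
  define N where "N = degree q"
  define F1 where "F1 = (\<lambda>j (x::complex). (x - 1)^j * x powi (2*int k - 2*int j - 1))"
  define F2 where "F2 = (\<lambda>j (x::complex). (x - 1)^j * x powi (2*int k - 2*int j))"
  have hol1: "F1 j holomorphic_on -{0}" for j unfolding F1_def by (auto intro!: holomorphic_intros)
  have hol2: "F2 j holomorphic_on -{0}" for j unfolding F2_def by (auto intro!: holomorphic_intros)
  have pt: "Astar \<alpha> n (2*int k) x = (\<Sum>j\<le>N. (coeff q j * (-1)^j) * (2 * F1 j x - F2 j x))" if x: "x \<noteq> 0" for x
  proof -
    have "Astar \<alpha> n (2*int k) x = x powi (2*int k) * ((2 * inverse x - 1) * poly q (inverse x * (inverse x - 1)))"
      unfolding Astar_def using rep by simp
    also have "\<dots> = (\<Sum>j\<le>N. coeff q j * (x powi (2*int k) * (2 * inverse x - 1) * (inverse x * (inverse x - 1)) ^ j))"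
      unfolding poly_altdef N_def by (simp add: sum_distrib_left mult_ac)
    also have "\<dots> = (\<Sum>j\<le>N. (coeff q j * (-1)^j) * (2 * F1 j x - F2 j x))"
      unfolding pt_term[OF x] F1_def F2_def by (simp add: mult_ac)
    finally show ?thesis .
  qed
  have ev: "eventually (\<lambda>x. Astar \<alpha> n (2*int k) x = (\<Sum>j\<le>N. (coeff q j * (-1)^j) * (2 * F1 j x - F2 j x))) (nhds (1::complex))"
  proof -
    have "eventually (\<lambda>y. y \<in> -{0::complex}) (nhds 1)"
      by (intro eventually_nhds_in_open) auto
    then show ?thesis by eventually_elim (auto intro!: pt)
  qed
  have "aCoef \<alpha> n k = (deriv ^^ k) (\<lambda>x. \<Sum>j\<le>N. (coeff q j * (-1)^j) * (2 * F1 j x - F2 j x)) 1"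
    unfolding aCoef_def by (rule higher_deriv_cong_ev[OF ev refl])
  also have "\<dots> = (\<Sum>j\<le>N. (deriv ^^ k) (\<lambda>x. (coeff q j * (-1)^j) * (2 * F1 j x - F2 j x)) 1)"
    by (rule higher_deriv_sum[where S="-{0}"]) (auto intro!: holomorphic_intros hol1 hol2)
  also have "\<dots> = (\<Sum>j\<le>N. (coeff q j * (-1)^j) * (2 * (deriv ^^ k) (F1 j) 1 - (deriv ^^ k) (F2 j) 1))"
  proof (intro sum.cong refl)
    fix j
    have "(deriv ^^ k) (\<lambda>x. (coeff q j * (-1)^j) * (2 * F1 j x - F2 j x)) 1
        = (coeff q j * (-1)^j) * (deriv ^^ k) (\<lambda>x. 2 * F1 j x - F2 j x) 1"
      by (rule higher_deriv_cmult[where A="-{0}"]) (auto intro!: holomorphic_intros hol1 hol2)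
    also have "(deriv ^^ k) (\<lambda>x. 2 * F1 j x - F2 j x) 1 = (deriv ^^ k) (\<lambda>x. 2 * F1 j x) 1 - (deriv ^^ k) (F2 j) 1"
      by (rule higher_deriv_diff[where S="-{0}"]) (auto intro!: holomorphic_intros hol1 hol2)
    also have "(deriv ^^ k) (\<lambda>x. 2 * F1 j x) 1 = 2 * (deriv ^^ k) (F1 j) 1"
      by (rule higher_deriv_cmult[where A="-{0}"]) (auto intro!: holomorphic_intros hol1 hol2)
    finally show "(deriv ^^ k) (\<lambda>x. (coeff q j * (-1)^j) * (2 * F1 j x - F2 j x)) 1
        = (coeff q j * (-1)^j) * (2 * (deriv ^^ k) (F1 j) 1 - (deriv ^^ k) (F2 j) 1)" .
  qed
  also have "\<dots> = (\<Sum>j\<le>N. if j = k then (-1)^k * fact k * coeff q k else 0)"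
  proof (intro sum.cong refl)
    fix j
    have d1: "(deriv ^^ k) (F1 j) 1 = (if j \<le> k then of_nat (k choose j) * fact j * ff (2*int k - 2*int j - 1) (k - j) else 0)"
      unfolding F1_def by (rule lemD)
    have d2: "(deriv ^^ k) (F2 j) 1 = (if j \<le> k then of_nat (k choose j) * fact j * ff (2*int k - 2*int j) (k - j) else 0)"
      unfolding F2_def by (rule lemD)
    show "(coeff q j * (-1)^j) * (2 * (deriv ^^ k) (F1 j) 1 - (deriv ^^ k) (F2 j) 1)
        = (if j = k then (-1)^k * fact k * coeff q k else 0)"
    proof (cases "j < k")
      case True
      then have "2 * ff (2*int k - 2*int j - 1) (k-j) = ff (2*int k - 2*int j) (k-j)" by (rule ffE)
      then have "2 * (deriv ^^ k) (F1 j) 1 - (deriv ^^ k) (F2 j) 1 = 0"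
        unfolding d1 d2 using True by (simp add: algebra_simps)
      then show ?thesis using True by simp
    next
      case False
      show ?thesis
      proof (cases "j = k")
        case True
        then show ?thesis unfolding d1 d2 by simp
      next
        case False2: False
        then show ?thesis unfolding d1 d2 using False by simp
      qed
    qed
  qed
  also have "\<dots> = (-1)^k * fact k * coeff q k"
  proof (cases "k \<le> N")
    case True then show ?thesis by (subst sum.delta) auto
  next
    case False
    then have "coeff q k = 0" unfolding N_def by (intro coeff_eq_0) simp
    then show ?thesis by (subst sum.delta) auto
  qed
  finally show ?thesis .
qed




definition AP :: "(nat \<Rightarrow> complex) \<Rightarrow> nat \<Rightarrow> complex poly" where
  "AP \<alpha> n = (\<Sum>v=0..n. monom (of_nat (n choose v) * \<alpha> (n - v)) v)"

lemma poly_AP: "poly (AP \<alpha> n) x = appellA \<alpha> n x"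
  unfolding AP_def appellA_def by (simp add: poly_sum poly_monom)

lemma degree_AP: "degree (AP \<alpha> n) \<le> n"
  unfolding AP_def by (rule degree_sum_le) (auto intro: order.trans[OF degree_monom_le])

abbreviation LP :: "complex poly" where "LP \<equiv> [:-1, 2:]"

lemma odd_repr:
  assumes R: "propR \<alpha>" and n: "odd n"
  shows "\<exists>q. (\<forall>x. appellA \<alpha> n x = (2*x - 1) * poly q (x*(x-1))) \<and> degree q \<le> n div 2"
proof -
  define P where "P = AP \<alpha> n"
  have Pc: "pcompose P tP = -P"
  proof -
    have "poly (pcompose P tP) x = poly (-P) x" for x
    proof -
      have "appellA \<alpha> n (1 - x) = (-1)^n * appellA \<alpha> n x" using R unfolding propR_def by blast
      then show ?thesis unfolding P_def using n by (simp add: poly_pcompose poly_AP)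
    qed
    then show ?thesis by (simp add: poly_eq_poly_eq_iff[symmetric] fun_eq_iff)
  qed
  have "poly P (1/2) = 0"
  proof -
    have "poly (pcompose P tP) (1/2) = poly P (1/2)" by (simp add: poly_pcompose)
    then have "- poly P (1/2) = poly P (1/2)" unfolding Pc by simp
    then show ?thesis by simp
  qed
  then have "[:-(1/2), 1:] dvd P" by (simp only: poly_eq_0_iff_dvd)
  then obtain R0 where R0: "P = [:-(1/2), 1:] * R0" by (auto elim: dvdE)
  define Rp where "Rp = smult (1/2) R0"
  have PLR: "P = LP * Rp"
  proof -
    have "poly P x = poly (LP * Rp) x" for x
      unfolding R0 Rp_def by (simp add: algebra_simps)
    then show ?thesis by (simp add: poly_eq_poly_eq_iff[symmetric] fun_eq_iff)
  qed
  have LPc: "pcompose LP tP = -LP"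
    by (simp add: poly_eq_poly_eq_iff[symmetric] poly_pcompose fun_eq_iff algebra_simps)
  have LPnz: "LP \<noteq> 0" by simp
  have "LP * pcompose Rp tP = LP * Rp"
  proof -
    have "-LP * pcompose Rp tP = -(LP * Rp)"
      using Pc unfolding PLR pcompose_mult LPc .
    then have "-(LP * pcompose Rp tP) = -(LP * Rp)" by (simp only: minus_mult_left)
    then show ?thesis by (simp only: neg_equal_iff_equal)
  qed
  then have "pcompose Rp tP = Rp" by (rule mult_left_cancel[OF LPnz, THEN iffD1])
  from sym_repr[OF this] obtain q where q: "Rp = pcompose q sP" by blast
  have rep: "\<forall>x. appellA \<alpha> n x = (2*x - 1) * poly q (x*(x-1))"
  proof
    fix x
    have "appellA \<alpha> n x = poly (LP * Rp) x" unfolding PLR[symmetric] P_def poly_AP ..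
    also have "\<dots> = (2*x - 1) * poly q (x*(x-1))" unfolding q by (simp add: poly_pcompose algebra_simps)
    finally show "appellA \<alpha> n x = (2*x - 1) * poly q (x*(x-1))" .
  qed
  have "degree q \<le> n div 2"
  proof (cases "q = 0")
    case True then show ?thesis by simp
  next
    case False
    have dsP: "degree sP = 2" by simp
    have Rnz: "Rp \<noteq> 0" unfolding q using False pcompose_eq_0_iff[of sP q] dsP by simp
    have "degree P = degree LP + degree Rp" unfolding PLR by (rule degree_mult_eq[OF LPnz Rnz])
    also have "degree Rp = degree q * 2" unfolding q degree_pcompose dsP ..
    finally have "degree P = 1 + degree q * 2" by simp
    with degree_AP[of \<alpha> n] have "1 + degree q * 2 \<le> n" unfolding P_def by simp
    then show ?thesis by linarith
  qed
  with rep show ?thesis by blast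
qed

lemma Fpoly_eq:
  assumes rep: "\<forall>x. appellA \<alpha> n x = (2*x - 1) * poly q (x*(x-1))" and dq: "degree q \<le> n div 2" and n: "odd n"
  shows "Fpoly \<alpha> n = q"
  unfolding Fpoly_def
proof (rule the_equality)
  show "degree q \<le> n div 2 \<and> (\<forall>x. appellA \<alpha> n x = (2 * x - 1) ^ delta n * poly q (x * (x - 1)))"
    using rep dq n by (simp add: delta_def)
next
  fix p assume "degree p \<le> n div 2 \<and> (\<forall>x. appellA \<alpha> n x = (2 * x - 1) ^ delta n * poly p (x * (x - 1)))"
  then have rp: "\<forall>x. appellA \<alpha> n x = (2 * x - 1) * poly p (x * (x - 1))" using n by (simp add: delta_def)
  have "poly (LP * pcompose p sP) x = poly (LP * pcompose q sP) x" for x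
    using rp rep by (simp add: poly_pcompose algebra_simps)
  then have "LP * pcompose p sP = LP * pcompose q sP" by (simp add: poly_eq_poly_eq_iff[symmetric] fun_eq_iff)
  then have "pcompose p sP = pcompose q sP" by (rule mult_left_cancel[THEN iffD1, rotated]) simp
  then have "pcompose (p - q) sP = 0" by (simp add: pcompose_diff)
  then have "p - q = 0" by (rule pcompose_eq_0) simp
  then show "p = q" by simp
qed


theorem mainTheorem16:
  fixes \<alpha> :: "nat \<Rightarrow> complex"
  assumes R: "propR \<alpha>"
  shows "(\<forall>n k. k \<le> n \<longrightarrow>
            aCoef \<alpha> n k = (-1) ^ n * fact k *
              (\<Sum>\<nu>=0..k. of_nat ((2 * k - \<nu>) choose k) * of_nat (n choose \<nu>) * \<alpha> (n - \<nu>)))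
       \<and> (\<forall>n k. 2 \<le> n \<and> k \<le> n - 2 \<longrightarrow>
            aCoef \<alpha> n (k + 2) = (4 * of_nat k + 6) * aCoef \<alpha> n (k + 1)
              + of_nat (n * (n - 1)) * aCoef \<alpha> (n - 2) k)
       \<and> (\<forall>n. odd n \<longrightarrow>
            (\<forall>x. appellA \<alpha> n x = (2 * x - 1) * poly (Fpoly \<alpha> n) (x * (x - 1)))
            \<and> (\<forall>k \<le> n div 2. fhat \<alpha> n k = (-1) ^ k * aCoef \<alpha> n k))"
proof -
  have h1: "\<forall>n k. k \<le> n \<longrightarrow>
            aCoef \<alpha> n k = (-1) ^ n * fact k *
              (\<Sum>\<nu>=0..k. of_nat ((2 * k - \<nu>) choose k) * of_nat (n choose \<nu>) * \<alpha> (n - \<nu>))"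
    using part1[OF R] by blast
  have h2: "\<forall>n k. 2 \<le> n \<and> k \<le> n - 2 \<longrightarrow>
            aCoef \<alpha> n (k + 2) = (4 * of_nat k + 6) * aCoef \<alpha> n (k + 1)
              + of_nat (n * (n - 1)) * aCoef \<alpha> (n - 2) k"
    using part2[OF R] by blast
  have h3: "(\<forall>x. appellA \<alpha> n x = (2 * x - 1) * poly (Fpoly \<alpha> n) (x * (x - 1)))
            \<and> (\<forall>k \<le> n div 2. fhat \<alpha> n k = (-1) ^ k * aCoef \<alpha> n k)" if n: "odd n" for n
  proof
    from odd_repr[OF R n] obtain q where rep: "\<forall>x. appellA \<alpha> n x = (2*x - 1) * poly q (x*(x-1))"
      and dq: "degree q \<le> n div 2" by blast
    have F: "Fpoly \<alpha> n = q" by (rule Fpoly_eq[OF rep dq n])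
    show "\<forall>x. appellA \<alpha> n x = (2 * x - 1) * poly (Fpoly \<alpha> n) (x * (x - 1))"
      unfolding F using rep by simp
    show "\<forall>k \<le> n div 2. fhat \<alpha> n k = (-1) ^ k * aCoef \<alpha> n k"
    proof (intro allI impI)
      fix k :: nat
      have "(-1) ^ k * aCoef \<alpha> n k = ((-1)^k * (-1)^k) * fact k * coeff q k"
        unfolding aCoef_from_F[OF rep] by (simp only: mult.assoc)
      also have "(-1::complex)^k * (-1)^k = 1" by (simp flip: power_add)
      finally show "fhat \<alpha> n k = (-1) ^ k * aCoef \<alpha> n k" unfolding fhat_def F by simp
    qed
  qed
  show ?thesis using h1 h2 h3 by blast
qed

end
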